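(* Let $p$ and $q$ be distinct primes. Let $G=Q\rtimes P$ be a finite non-abelian semi-direct product of a Sylow $q$-subgroup $Q$ by a non-normal cyclic Sylow $p$-subgroup $P$. Suppose that $Q$ is special, so either $Q$ is elementary abelian or $Q'=Z(Q)=\Phi(Q)$, and suppose that $P$ acts by conjugation trivially on $Q'$ and irreducibly on $Q/Q'$. Then $G$ is exponent-critical.
   Context: A finite group $G$ is exponent-critical if $\exp(G)$ is not the least common multiple of the exponents of the proper non-abelian subgroups of $G$. A $q$-group $Q$ is special if either $Q$ is elementary abelian or $Q$ has nilpotency class $2$ with $Q'=Z(Q)=\Phi(Q)$ elementary abelian. *)

theory Defs
  imports "HOL-Algebra.Algebra"
begin

text \<open>Exponent of a subgroup H of G: lcm of the orders of its elements
 (orders computed in G, which coincide with the orders in H).\<close>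
definition sub_exp :: "('a, 'b) monoid_scheme \<Rightarrow> 'a set \<Rightarrow> nat" where
  "sub_exp G H = Lcm (group.ord G ` H)"

definition group_exp :: "('a, 'b) monoid_scheme \<Rightarrow> nat" where
  "group_exp G = sub_exp G (carrier G)"

definition abelian_sub :: "('a, 'b) monoid_scheme \<Rightarrow> 'a set \<Rightarrow> bool" where
  "abelian_sub G H \<longleftrightarrow> (\<forall>x\<in>H. \<forall>y\<in>H. x \<otimes>\<^bsub>G\<^esub> y = y \<otimes>\<^bsub>G\<^esub> x)"

definition exponent_critical :: "('a, 'b) monoid_scheme \<Rightarrow> bool" where
  "exponent_critical G \<longleftrightarrow>
     group_exp G \<noteq> Lcm (sub_exp G ` {H. subgroup H G \<and> H \<subset> carrier G \<and> \<not> abelian_sub G H})"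

definition sub_center :: "('a, 'b) monoid_scheme \<Rightarrow> 'a set \<Rightarrow> 'a set" where
  "sub_center G H = {z \<in> H. \<forall>x\<in>H. z \<otimes>\<^bsub>G\<^esub> x = x \<otimes>\<^bsub>G\<^esub> z}"

definition maximal_sub :: "('a, 'b) monoid_scheme \<Rightarrow> 'a set \<Rightarrow> 'a set \<Rightarrow> bool" where
  "maximal_sub G M H \<longleftrightarrow> subgroup M G \<and> M \<subset> H \<and>
     (\<forall>K. subgroup K G \<longrightarrow> M \<subseteq> K \<longrightarrow> K \<subseteq> H \<longrightarrow> K = M \<or> K = H)"

text \<open>Frattini subgroup of H: intersection of the maximal subgroups of H (H if there are none).\<close>
definition frattini :: "('a, 'b) monoid_scheme \<Rightarrow> 'a set \<Rightarrow> 'a set" where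
  "frattini G H = H \<inter> \<Inter> {M. maximal_sub G M H}"

definition elementary_abelian :: "('a, 'b) monoid_scheme \<Rightarrow> nat \<Rightarrow> 'a set \<Rightarrow> bool" where
  "elementary_abelian G q H \<longleftrightarrow> abelian_sub G H \<and> (\<forall>x\<in>H. x [^]\<^bsub>G\<^esub> q = \<one>\<^bsub>G\<^esub>)"

definition special :: "('a, 'b) monoid_scheme \<Rightarrow> nat \<Rightarrow> 'a set \<Rightarrow> bool" where
  "special G q Q \<longleftrightarrow> elementary_abelian G q Q \<or>
     (\<not> abelian_sub G Q \<and> derived G Q \<subseteq> sub_center G Q \<comment> \<open>nilpotency class 2\<close>
      \<and> derived G Q = sub_center G Q \<and> sub_center G Q = frattini G Q
      \<and> elementary_abelian G q (derived G Q))"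

definition sylow_sub :: "('a, 'b) monoid_scheme \<Rightarrow> nat \<Rightarrow> 'a set \<Rightarrow> bool" where
  "sylow_sub G p P \<longleftrightarrow> subgroup P G \<and>
     (\<exists>k m. card P = p ^ k \<and> order G = p ^ k * m \<and> \<not> p dvd m)"

definition cyclic_sub :: "('a, 'b) monoid_scheme \<Rightarrow> 'a set \<Rightarrow> bool" where
  "cyclic_sub G P \<longleftrightarrow> (\<exists>g\<in>P. P = generate G {g})"

definition invariant_under :: "('a, 'b) monoid_scheme \<Rightarrow> 'a set \<Rightarrow> 'a set \<Rightarrow> bool" where
  "invariant_under G P N \<longleftrightarrow> (\<forall>x\<in>P. (\<lambda>y. x \<otimes>\<^bsub>G\<^esub> y \<otimes>\<^bsub>G\<^esub> inv\<^bsub>G\<^esub> x) ` N = N)"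

text \<open>P acts irreducibly by conjugation on Q/Q': the quotient is nontrivial and
 the only P-invariant subgroups N with Q' <= N <= Q are Q' and Q.\<close>
definition acts_irreducibly :: "('a, 'b) monoid_scheme \<Rightarrow> 'a set \<Rightarrow> 'a set \<Rightarrow> bool" where
  "acts_irreducibly G P Q \<longleftrightarrow> derived G Q \<subset> Q \<and>
     (\<forall>N. subgroup N G \<longrightarrow> derived G Q \<subseteq> N \<longrightarrow> N \<subseteq> Q \<longrightarrow> invariant_under G P N
        \<longrightarrow> N = derived G Q \<or> N = Q)"

end

theory Submission imports Defs "HOL-Computational_Algebra.Primes" begin

lemma nt_lemma:
  fixes p k m a :: nat
  assumes "Factorial_Ring.prime p" "k \<ge> 1" "a dvd p^k * m" "\<not> p^k dvd a"
  shows "a dvd p^(k-1) * m"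
proof -
  obtain c where c: "p^k * m = a * c" using assms(3) by (auto elim: dvdE)
  show ?thesis
  proof (cases "p dvd c")
    case True
    then obtain d where d: "c = p * d" by (auto elim: dvdE)
    have "p^k = p * p^(k-1)" using assms(2) by (metis Suc_diff_le diff_Suc_1 power_Suc)
    hence "p * (p^(k-1) * m) = p * (a * d)" using c d by (simp add: algebra_simps)
    hence "p^(k-1) * m = a * d" using assms(1) prime_gt_0_nat by simp
    thus ?thesis by simp
  next
    case False
    have "coprime (p^k) c" using False assms(1) by (metis coprime_commute coprime_power_left_iff prime_imp_coprime)
    moreover have "p^k dvd a * c" using c by (metis dvd_triv_left)
    ultimately have "p^k dvd a" using coprime_dvd_mult_left_iff by blast
    thus ?thesis using assms(4) by simp
  qed
qed

lemma (in group) sub_nat_pow_closed: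
  assumes "subgroup H G" "h \<in> H" shows "h [^] (n::nat) \<in> H"
  using subgroup_int_pow_closed[OF assms, of "int n"] by (simp add: int_pow_int)

lemma (in group) inv_cancel_l [simp]: "x \<in> carrier G \<Longrightarrow> y \<in> carrier G \<Longrightarrow> inv x \<otimes> (x \<otimes> y) = y"
  by (simp add: m_assoc[symmetric])

lemma (in group) inv_cancel_r [simp]: "x \<in> carrier G \<Longrightarrow> y \<in> carrier G \<Longrightarrow> x \<otimes> (inv x \<otimes> y) = y"
  by (simp add: m_assoc[symmetric])

lemma (in group) pow_card_subgroup:
  assumes "subgroup H G" "y \<in> H"
  shows "y [^] card H = \<one>"
proof -
  interpret HH: group "G\<lparr>carrier := H\<rparr>"
    using subgroup.subgroup_is_group[OF assms(1) is_group] .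
  have "y [^]\<^bsub>G\<lparr>carrier := H\<rparr>\<^esub> order (G\<lparr>carrier := H\<rparr>) = \<one>\<^bsub>G\<lparr>carrier := H\<rparr>\<^esub>"
    using HH.pow_order_eq_1 assms(2) by simp
  thus ?thesis by (simp add: order_def nat_pow_consistent[symmetric])
qed

lemma (in group) pow_decomp:
  assumes "Q \<lhd> G" "a \<in> Q" "x \<in> carrier G"
  shows "\<exists>a'\<in>Q. (a \<otimes> x) [^] (n::nat) = a' \<otimes> x [^] n"
proof (induction n)
  case 0
  have "\<one> \<in> Q" using subgroup.one_closed[OF normal_imp_subgroup[OF assms(1)]] .
  moreover have "(a \<otimes> x) [^] (0::nat) = \<one> \<otimes> x [^] (0::nat)" by simp
  ultimately show ?case by blast
next
  case (Suc n)
  then obtain a' where a': "a' \<in> Q" "(a \<otimes> x) [^] n = a' \<otimes> x [^] n" by blast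
  have Qs: "subgroup Q G" using assms(1) normal_imp_subgroup by blast
  have ac: "a \<in> carrier G" "a' \<in> carrier G" using subgroup.mem_carrier[OF Qs] assms(2) a'(1) by blast+
  have xn: "x [^] n \<in> carrier G" using assms(3) by (rule nat_pow_closed)
  have c: "x [^] n \<otimes> a \<otimes> inv (x [^] n) \<in> Q"
    by (rule normal.inv_op_closed2[OF assms(1) xn assms(2)])
  have "(a \<otimes> x) [^] Suc n = (a \<otimes> x) [^] n \<otimes> (a \<otimes> x)" by (rule nat_pow_Suc)
  also have "\<dots> = a' \<otimes> x [^] n \<otimes> (a \<otimes> x)" by (simp only: a'(2))
  also have "\<dots> = (a' \<otimes> (x [^] n \<otimes> a \<otimes> inv (x [^] n))) \<otimes> (x [^] n \<otimes> x)"
    using ac assms(3) xn by (simp add: m_assoc)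
  also have "x [^] n \<otimes> x = x [^] Suc n" by (rule nat_pow_Suc[symmetric])
  finally show ?case using subgroup.m_closed[OF Qs a'(1) c] by blast
qed

lemma (in group) conj_in_N:
  assumes "subgroup N G" "derived G Q \<subseteq> N" "N \<subseteq> Q" "subgroup Q G" "a \<in> Q" "n \<in> N"
  shows "inv a \<otimes> n \<otimes> a \<in> N"
proof -
  have ac: "a \<in> carrier G" "n \<in> carrier G" using subgroup.mem_carrier[OF assms(4)] subgroup.mem_carrier[OF assms(1)] assms(5,6) by blast+
  have nQ: "n \<in> Q" using assms by blast
  have "inv n \<otimes> inv a \<otimes> inv (inv n) \<otimes> inv (inv a) \<in> derived_set G Q"
    using subgroup.m_inv_closed[OF assms(4) assms(5)] subgroup.m_inv_closed[OF assms(4) nQ] assms(5) nQ by blast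
  hence d: "inv n \<otimes> inv a \<otimes> n \<otimes> a \<in> N"
    using assms(2) ac unfolding derived_def by (auto intro: generate.incl)
  have "inv a \<otimes> n \<otimes> a = n \<otimes> (inv n \<otimes> inv a \<otimes> n \<otimes> a)"
    using ac by (simp add: m_assoc[symmetric])
  thus ?thesis using subgroup.m_closed[OF assms(1) assms(6) d] by simp
qed

lemma (in group) exists_maximal:
  assumes "finite (carrier G)" "subgroup K G" "subgroup Q G" "K \<subset> Q"
  shows "\<exists>M. maximal_sub G M Q \<and> K \<subseteq> M"
proof -
  define S where "S = {M. subgroup M G \<and> K \<subseteq> M \<and> M \<subset> Q}"
  have "S \<subseteq> Pow (carrier G)" unfolding S_def using subgroup.subset by auto
  hence fS: "finite S" using assms(1) finite_subset by blast
  have "K \<in> S" using assms unfolding S_def by blast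
  then obtain M where M: "M \<in> S" "\<forall>b\<in>S. M \<le> b \<longrightarrow> M = b"
    using finite_has_maximal[OF fS] by blast
  have "maximal_sub G M Q" unfolding maximal_sub_def
  proof (intro conjI allI impI)
    show "subgroup M G" "M \<subset> Q" using M(1) unfolding S_def by auto
  next
    fix L assume L: "subgroup L G" "M \<subseteq> L" "L \<subseteq> Q"
    show "L = M \<or> L = Q"
    proof (cases "L = Q")
      case False
      hence "L \<in> S" using L M(1) unfolding S_def by auto
      thus ?thesis using M(2) L(2) by auto
    qed simp
  qed
  thus ?thesis using M(1) unfolding S_def by blast
qed

lemma (in group) key:
  assumes fin: "finite (carrier G)" and pp: "Factorial_Ring.prime p" and pq: "Factorial_Ring.prime q"
    and pneq: "p \<noteq> q"
    and cP: "card P = p^k" and k1: "k \<ge> 1" and cQ: "card Q = q^j"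
    and QN: "Q \<lhd> G" and Psub: "subgroup P G" and QP: "Q <#> P = carrier G"
    and D1: "derived G Q \<subseteq> sub_center G Q"
    and D2: "\<And>M. maximal_sub G M Q \<Longrightarrow> derived G Q \<subseteq> M"
    and triv: "\<forall>x\<in>P. \<forall>y\<in>derived G Q. x \<otimes> y \<otimes> inv x = y"
    and irr: "acts_irreducibly G P Q"
    and Hs: "subgroup H G" and Hp: "H \<subset> carrier G" and Hna: "\<not> abelian_sub G H"
    and h: "h \<in> H" and ordh: "ord h = p^k"
  shows False
proof -
  have Qs: "subgroup Q G" using QN normal_imp_subgroup by blast
  have hc: "h \<in> carrier G" using subgroup.mem_carrier[OF Hs] h by blast
  have "h \<in> Q <#> P" using QP hc by simp
  then obtain a x where ax: "a \<in> Q" "x \<in> P" "h = a \<otimes> x" unfolding set_mult_def by blast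
  have ac: "a \<in> carrier G" using subgroup.mem_carrier[OF Qs] ax by blast
  have xc: "x \<in> carrier G" using subgroup.mem_carrier[OF Psub] ax by blast
  have pgt: "p > 1" using pp prime_gt_1_nat by blast
  have ordx: "ord x = p^k"
  proof (rule ccontr)
    assume ne: "ord x \<noteq> p^k"
    have "x [^] card P = \<one>" using pow_card_subgroup[OF Psub ax(2)] .
    hence d1: "ord x dvd p^k" using pow_eq_id xc cP by simp
    have "\<not> p^k dvd ord x" using d1 ne dvd_antisym by blast
    hence "ord x dvd p^(k-1) * 1" using nt_lemma[OF pp k1, of "ord x" 1] d1 by simp
    hence x1: "x [^] (p^(k-1)) = \<one>" using pow_eq_id xc by simp
    obtain a' where a': "a' \<in> Q" "h [^] (p^(k-1)) = a' \<otimes> x [^] (p^(k-1))"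
      using pow_decomp[OF QN ax(1) xc] ax(3) by blast
    have a'c: "a' \<in> carrier G" using subgroup.mem_carrier[OF Qs] a' by blast
    have ha: "h [^] (p^(k-1)) = a'" using a' x1 a'c by simp
    have pk: "p^(k-1) * p = p^k" using k1 by (metis Suc_diff_le diff_Suc_1 power_Suc2)
    have "a' [^] p = h [^] (p^(k-1) * p)" using ha[symmetric] hc by (simp add: nat_pow_pow)
    also have "\<dots> = h [^] ord h" using pk ordh by simp
    also have "\<dots> = \<one>" using pow_ord_eq_1[OF hc] .
    finally have "a' [^] p = \<one>" .
    hence o1: "ord a' dvd p" using pow_eq_id a'c by simp
    have "a' [^] card Q = \<one>" using pow_card_subgroup[OF Qs a'(1)] .
    hence o2: "ord a' dvd q^j" using pow_eq_id a'c cQ by simp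
    have "coprime p (q^j)" using pp pq pneq by (simp add: primes_coprime coprime_power_right_iff)
    hence "ord a' = 1" using o1 o2 by (meson coprime_common_divisor_nat)
    hence "a' = \<one>" using ord_eq_1 a'c by simp
    hence "h [^] (p^(k-1)) = \<one>" using ha by simp
    hence "p^k dvd p^(k-1)" using pow_eq_id hc ordh by simp
    moreover have "p^(k-1) < p^k" using pgt k1 by simp
    moreover have "p^(k-1) > 0" using pgt by simp
    ultimately show False by (simp add: nat_dvd_not_less)
  qed
  have genx: "generate G {x} = P"
  proof -
    have s: "generate G {x} \<subseteq> P" using generate_subgroup_incl[OF _ Psub] ax(2) by blast
    have "card (generate G {x}) = card P" using generate_pow_card[OF xc] ordx cP by simp
    moreover have "finite P" using finite_subset[OF subgroup.subset[OF Psub] fin] .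
    ultimately show ?thesis using s card_subset_eq by blast
  qed
  have Pel: "\<forall>y\<in>P. \<exists>n::nat. y = x [^] n"
    using generate_pow_on_finite_carrier[OF fin xc] genx by blast
  define D where "D = derived G Q"
  have Ds: "subgroup D G" unfolding D_def using derived_is_subgroup[OF subgroup.subset[OF Qs]] .
  have DQ: "D \<subseteq> Q" using D1 unfolding D_def sub_center_def by blast
  have cent: "\<forall>c\<in>D. \<forall>b\<in>Q. c \<otimes> b = b \<otimes> c" using D1 unfolding D_def sub_center_def by blast
  have Dc: "\<And>c. c \<in> D \<Longrightarrow> c \<in> carrier G" using subgroup.mem_carrier[OF Ds] by blast
  have Qc: "\<And>c. c \<in> Q \<Longrightarrow> c \<in> carrier G" using subgroup.mem_carrier[OF Qs] by blast
  have hfix: "\<forall>c\<in>D. h \<otimes> c \<otimes> inv h = c"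
  proof
    fix c assume c: "c \<in> D"
    have cc: "c \<in> carrier G" using Dc c .
    have "h \<otimes> c \<otimes> inv h = a \<otimes> (x \<otimes> c \<otimes> inv x) \<otimes> inv a"
      using ax(3) ac xc cc by (simp add: inv_mult_group m_assoc)
    also have "\<dots> = a \<otimes> c \<otimes> inv a" using triv ax(2) c unfolding D_def by simp
    also have "\<dots> = c \<otimes> a \<otimes> inv a" using cent c ax(1) by simp
    also have "\<dots> = c" using ac cc by (simp add: m_assoc)
    finally show "h \<otimes> c \<otimes> inv h = c" .
  qed
  have hcomm: "\<forall>c\<in>D. h \<otimes> c = c \<otimes> h"
  proof
    fix c assume c: "c \<in> D"
    have cc: "c \<in> carrier G" using Dc c .
    have "h \<otimes> c = h \<otimes> c \<otimes> inv h \<otimes> h" using hc cc by (simp add: m_assoc)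
    thus "h \<otimes> c = c \<otimes> h" using hfix c by simp
  qed

  define K where "K = H \<inter> Q"
  have Ks: "subgroup K G" unfolding K_def using subgroups_Inter_pair[OF Hs Qs] .
  have KQ: "K \<subseteq> Q" unfolding K_def by blast
  have Kc: "\<And>k. k \<in> K \<Longrightarrow> k \<in> carrier G" using KQ Qc by blast
  have centI: "\<And>c b. c \<in> D \<Longrightarrow> b \<in> Q \<Longrightarrow> c \<otimes> b = b \<otimes> c" using cent by blast
  define N where "N = K <#> D"
  have NI: "\<And>k c. k \<in> K \<Longrightarrow> c \<in> D \<Longrightarrow> k \<otimes> c \<in> N" unfolding N_def set_mult_def by auto
  have NE: "\<And>z. z \<in> N \<Longrightarrow> \<exists>k c. k \<in> K \<and> c \<in> D \<and> z = k \<otimes> c" unfolding N_def set_mult_def by auto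
  have NQ: "N \<subseteq> Q"
  proof
    fix z assume "z \<in> N"
    then obtain k c where kc: "k \<in> K" "c \<in> D" "z = k \<otimes> c" using NE by blast
    have "k \<in> Q" "c \<in> Q" using kc(1,2) KQ DQ by blast+
    thus "z \<in> Q" using subgroup.m_closed[OF Qs] kc(3) by simp
  qed
  have Ns: "subgroup N G"
  proof (rule subgroupI)
    show "N \<subseteq> carrier G" using NQ Qc by blast
    have "\<one> \<otimes> \<one> \<in> N" using NI[OF subgroup.one_closed[OF Ks] subgroup.one_closed[OF Ds]] .
    thus "N \<noteq> {}" by blast
  next
    fix z assume "z \<in> N"
    then obtain k c where kc: "k \<in> K" "c \<in> D" "z = k \<otimes> c" using NE by blast
    have kcc: "k \<in> carrier G" "c \<in> carrier G" using Kc[OF kc(1)] Dc[OF kc(2)] .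
    have ik: "inv k \<in> K" using subgroup.m_inv_closed[OF Ks kc(1)] .
    have ic: "inv c \<in> D" using subgroup.m_inv_closed[OF Ds kc(2)] .
    have "inv z = inv c \<otimes> inv k" using kc(3) kcc inv_mult_group by simp
    also have "\<dots> = inv k \<otimes> inv c" using centI[OF ic] ik KQ by blast
    finally show "inv z \<in> N" using NI[OF ik ic] by simp
  next
    fix z w assume zw: "z \<in> N" "w \<in> N"
    obtain k c where kc: "k \<in> K" "c \<in> D" "z = k \<otimes> c" using NE zw(1) by blast
    obtain k2 c2 where kc2: "k2 \<in> K" "c2 \<in> D" "w = k2 \<otimes> c2" using NE zw(2) by blast
    have kcc: "k \<in> carrier G" "c \<in> carrier G" "k2 \<in> carrier G" "c2 \<in> carrier G"
      using Kc[OF kc(1)] Dc[OF kc(2)] Kc[OF kc2(1)] Dc[OF kc2(2)] .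
    have "z \<otimes> w = k \<otimes> (c \<otimes> k2) \<otimes> c2" using kc(3) kc2(3) kcc by (simp add: m_assoc)
    also have "c \<otimes> k2 = k2 \<otimes> c" using centI[OF kc(2)] kc2(1) KQ by blast
    also have "k \<otimes> (k2 \<otimes> c) \<otimes> c2 = (k \<otimes> k2) \<otimes> (c \<otimes> c2)" using kcc by (simp add: m_assoc)
    finally show "z \<otimes> w \<in> N" using NI[OF subgroup.m_closed[OF Ks kc(1) kc2(1)] subgroup.m_closed[OF Ds kc(2) kc2(2)]]
      by simp
  qed
  have DN: "D \<subseteq> N"
  proof
    fix c assume c: "c \<in> D"
    have "\<one> \<otimes> c \<in> N" using NI[OF subgroup.one_closed[OF Ks] c] .
    thus "c \<in> N" using Dc[OF c] by simp
  qed
  have hN: "\<forall>z\<in>N. h \<otimes> z \<otimes> inv h \<in> N"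
  proof
    fix z assume "z \<in> N"
    then obtain k c where kc: "k \<in> K" "c \<in> D" "z = k \<otimes> c" using NE by blast
    have kcc: "k \<in> carrier G" "c \<in> carrier G" using Kc[OF kc(1)] Dc[OF kc(2)] .
    have "h \<otimes> z \<otimes> inv h = (h \<otimes> k \<otimes> inv h) \<otimes> (h \<otimes> c \<otimes> inv h)"
      using kc(3) kcc hc by (simp add: m_assoc)
    also have "h \<otimes> c \<otimes> inv h = c" using hfix kc(2) by blast
    finally have e: "h \<otimes> z \<otimes> inv h = (h \<otimes> k \<otimes> inv h) \<otimes> c" .
    have kH: "k \<in> H" "k \<in> Q" using kc(1) unfolding K_def by blast+
    have "h \<otimes> k \<otimes> inv h \<in> H"
      using subgroup.m_closed[OF Hs subgroup.m_closed[OF Hs h kH(1)] subgroup.m_inv_closed[OF Hs h]] .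
    moreover have "h \<otimes> k \<otimes> inv h \<in> Q" using normal.inv_op_closed2[OF QN hc kH(2)] .
    ultimately have "h \<otimes> k \<otimes> inv h \<in> K" unfolding K_def by blast
    thus "h \<otimes> z \<otimes> inv h \<in> N" using e NI[OF _ kc(2)] by simp
  qed
  have DN': "derived G Q \<subseteq> N" using DN unfolding D_def .
  have xN: "\<forall>z\<in>N. x \<otimes> z \<otimes> inv x \<in> N"
  proof
    fix z assume z: "z \<in> N"
    have zc: "z \<in> carrier G" using subgroup.mem_carrier[OF Ns] z by blast
    have "x = inv a \<otimes> h" using ax(3) ac xc by (simp add: m_assoc[symmetric])
    hence "x \<otimes> z \<otimes> inv x = inv a \<otimes> (h \<otimes> z \<otimes> inv h) \<otimes> a"
      using ac hc zc by (simp add: inv_mult_group m_assoc)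
    thus "x \<otimes> z \<otimes> inv x \<in> N" using conj_in_N[OF Ns DN' NQ Qs ax(1)] hN z by simp
  qed
  have xnN: "\<forall>z\<in>N. x [^] n \<otimes> z \<otimes> inv (x [^] n) \<in> N" for n :: nat
  proof (induction n)
    case 0
    then show ?case using subgroup.mem_carrier[OF Ns] by simp
  next
    case (Suc n)
    show ?case
    proof
      fix z assume z: "z \<in> N"
      have zc: "z \<in> carrier G" using subgroup.mem_carrier[OF Ns] z by blast
      have "x [^] Suc n \<otimes> z \<otimes> inv (x [^] Suc n) = x [^] n \<otimes> (x \<otimes> z \<otimes> inv x) \<otimes> inv (x [^] n)"
        using xc zc by (simp add: inv_mult_group m_assoc)
      thus "x [^] Suc n \<otimes> z \<otimes> inv (x [^] Suc n) \<in> N" using Suc xN z by simp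
    qed
  qed
  have PN: "\<forall>y\<in>P. \<forall>z\<in>N. y \<otimes> z \<otimes> inv y \<in> N"
  proof (intro ballI)
    fix y z assume yz: "y \<in> P" "z \<in> N"
    obtain n :: nat where "y = x [^] n" using Pel yz(1) by blast
    moreover have "x [^] n \<otimes> z \<otimes> inv (x [^] n) \<in> N" using xnN[of n] yz(2) by blast
    ultimately show "y \<otimes> z \<otimes> inv y \<in> N" by simp
  qed
  have invN: "invariant_under G P N" unfolding invariant_under_def
  proof
    fix y assume y: "y \<in> P"
    have yc: "y \<in> carrier G" using subgroup.mem_carrier[OF Psub] y by blast
    have iy: "inv y \<in> P" using subgroup.m_inv_closed[OF Psub y] .
    show "(\<lambda>z. y \<otimes> z \<otimes> inv y) ` N = N"
    proof
      show "(\<lambda>z. y \<otimes> z \<otimes> inv y) ` N \<subseteq> N" using PN y by blast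
    next
      show "N \<subseteq> (\<lambda>z. y \<otimes> z \<otimes> inv y) ` N"
      proof
        fix z assume z: "z \<in> N"
        have zc: "z \<in> carrier G" using subgroup.mem_carrier[OF Ns] z by blast
        have w: "inv y \<otimes> z \<otimes> inv (inv y) \<in> N" using PN iy z by blast
        have "z = y \<otimes> (inv y \<otimes> z \<otimes> inv (inv y)) \<otimes> inv y" using yc zc by (simp add: m_assoc)
        thus "z \<in> (\<lambda>z. y \<otimes> z \<otimes> inv y) ` N" using w by blast
      qed
    qed
  qed
  have "N = D \<or> N = Q" using irr Ns DN' NQ invN unfolding acts_irreducibly_def D_def by blast
  thus False
  proof
    assume NeqQ: "N = Q"
    have KeqQ: "K = Q"
    proof (rule ccontr)
      assume "K \<noteq> Q"
      hence "K \<subset> Q" using KQ by blast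
      then obtain M where M: "maximal_sub G M Q" "K \<subseteq> M" using exists_maximal[OF fin Ks Qs] by blast
      have Ms: "subgroup M G" "M \<subset> Q" using M(1) unfolding maximal_sub_def by auto
      have "D \<subseteq> M" using D2[OF M(1)] unfolding D_def .
      have "N \<subseteq> M"
      proof
        fix z assume "z \<in> N"
        then obtain k c where kc: "k \<in> K" "c \<in> D" "z = k \<otimes> c" using NE by blast
        have "k \<in> M" "c \<in> M" using kc(1,2) M(2) \<open>D \<subseteq> M\<close> by blast+
        thus "z \<in> M" using subgroup.m_closed[OF Ms(1)] kc(3) by simp
      qed
      thus False using NeqQ Ms(2) by blast
    qed
    hence QH: "Q \<subseteq> H" unfolding K_def by blast
    have "x = inv a \<otimes> h" using ax(3) ac xc by (simp add: m_assoc[symmetric])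
    hence "x \<in> H" using QH ax(1) h Hs by (metis subgroup.m_closed[OF Hs] subgroup.m_inv_closed[OF Hs] subsetD)
    hence "P \<subseteq> H" using genx generate_subgroup_incl[OF _ Hs] by blast
    hence "Q <#> P \<subseteq> H" using QH subgroup.m_closed[OF Hs] unfolding set_mult_def by blast
    thus False using QP Hp by blast
  next
    assume NeqD: "N = D"
    have KD: "K \<subseteq> D"
    proof
      fix k assume "k \<in> K"
      moreover have "k = k \<otimes> \<one>" using Kc[OF \<open>k \<in> K\<close>] by simp
      ultimately show "k \<in> D" using NeqD NI[OF _ subgroup.one_closed[OF Ds]] by metis
    qed
    have dec: "\<forall>z\<in>H. \<exists>b\<in>D. \<exists>n::nat. z = b \<otimes> h [^] n"
    proof
      fix z assume z: "z \<in> H"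
      have zc: "z \<in> carrier G" using subgroup.mem_carrier[OF Hs] z by blast
      hence "z \<in> Q <#> P" using QP by simp
      then obtain c y where cy: "c \<in> Q" "y \<in> P" "z = c \<otimes> y" unfolding set_mult_def by blast
      obtain n :: nat where yn: "y = x [^] n" using Pel cy(2) by blast
      obtain a' where a': "a' \<in> Q" "h [^] n = a' \<otimes> x [^] n"
        using pow_decomp[OF QN ax(1) xc] ax(3) by blast
      have cc: "c \<in> carrier G" "a' \<in> carrier G" using cy(1) a'(1) Qc by blast+
      have "x [^] n = inv a' \<otimes> h [^] n" using a'(2) cc xc by (simp add: m_assoc[symmetric])
      hence zb: "z = (c \<otimes> inv a') \<otimes> h [^] n" using cy(3) yn cc hc by (simp add: m_assoc)
      have bQ: "c \<otimes> inv a' \<in> Q" using subgroup.m_closed[OF Qs cy(1) subgroup.m_inv_closed[OF Qs a'(1)]] .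
      have "c \<otimes> inv a' = z \<otimes> inv (h [^] n)" using zb cc hc by (simp add: m_assoc)
      moreover have "h [^] n \<in> H" using sub_nat_pow_closed[OF Hs h] .
      ultimately have "c \<otimes> inv a' \<in> H" using subgroup.m_closed[OF Hs z subgroup.m_inv_closed[OF Hs]] by simp
      hence "c \<otimes> inv a' \<in> D" using bQ KD unfolding K_def by blast
      thus "\<exists>b\<in>D. \<exists>n::nat. z = b \<otimes> h [^] n" using zb by blast
    qed
    have hpc: "\<forall>c\<in>D. h [^] n \<otimes> c = c \<otimes> h [^] n" for n :: nat
    proof (induction n)
      case 0 then show ?case using Dc by simp
    next
      case (Suc n)
      show ?case
      proof
        fix c assume c: "c \<in> D"
        have cc: "c \<in> carrier G" using Dc c .
        have "h [^] Suc n \<otimes> c = h [^] n \<otimes> (h \<otimes> c)" using hc cc by (simp add: m_assoc)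
        also have "\<dots> = (h [^] n \<otimes> c) \<otimes> h" using hcomm c hc cc by (simp add: m_assoc)
        also have "\<dots> = c \<otimes> h [^] Suc n" using Suc c hc cc by (simp add: m_assoc)
        finally show "h [^] Suc n \<otimes> c = c \<otimes> h [^] Suc n" .
      qed
    qed
    have "abelian_sub G H" unfolding abelian_sub_def
    proof (intro ballI)
      fix z w assume "z \<in> H" "w \<in> H"
      then obtain b1 n1 b2 n2 where bn: "b1 \<in> D" "z = b1 \<otimes> h [^] (n1::nat)" "b2 \<in> D" "w = b2 \<otimes> h [^] (n2::nat)"
        using dec by meson
      have bc: "b1 \<in> carrier G" "b2 \<in> carrier G" using bn Dc by blast+
      have bb: "b1 \<otimes> b2 = b2 \<otimes> b1" using cent bn(1,3) DQ by blast
      have hh: "h [^] n1 \<otimes> h [^] n2 = h [^] n2 \<otimes> h [^] n1" using hc nat_pow_comm by blast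
      have "z \<otimes> w = b1 \<otimes> (h [^] n1 \<otimes> b2) \<otimes> h [^] n2" using bn bc hc by (simp add: m_assoc)
      also have "\<dots> = (b1 \<otimes> b2) \<otimes> (h [^] n1 \<otimes> h [^] n2)" using hpc bn(3) bc hc by (simp add: m_assoc)
      also have "\<dots> = (b2 \<otimes> b1) \<otimes> (h [^] n2 \<otimes> h [^] n1)" using bb hh by simp
      also have "\<dots> = b2 \<otimes> (h [^] n2 \<otimes> b1) \<otimes> h [^] n1" using hpc bn(1) bc hc by (simp add: m_assoc)
      also have "\<dots> = w \<otimes> z" using bn bc hc by (simp add: m_assoc)
      finally show "z \<otimes> w = w \<otimes> z" .
    qed
    thus False using Hna by blast
  qed
qed

theorem mainTheorem10:
  fixes G (structure) and p q :: nat and P Q :: "'a set"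
  assumes "group G" and "finite (carrier G)"
    and "Factorial_Ring.prime p" and "Factorial_Ring.prime q" and "p \<noteq> q"
    and "\<not> abelian_sub G (carrier G)"
    and "sylow_sub G q Q" and "sylow_sub G p P"
    and "Q \<lhd> G" and "Q \<inter> P = {\<one>}" and "Q <#> P = carrier G"
    and "cyclic_sub G P" and "\<not> (P \<lhd> G)"
    and "special G q Q"
    and "\<forall>x\<in>P. \<forall>y\<in>derived G Q. x \<otimes> y \<otimes> inv x = y"
    and "acts_irreducibly G P Q"
  shows "exponent_critical G"
proof -
  interpret group G by fact
  note fin = assms(2) and pp = assms(3) and pq = assms(4) and pneq = assms(5)
  obtain k m where Pk: "subgroup P G" "card P = p^k" "order G = p^k * m" "\<not> p dvd m"
    using assms(8) unfolding sylow_sub_def by blast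
  obtain j where Qj: "card Q = q^j" using assms(7) unfolding sylow_sub_def by blast
  have Qs: "subgroup Q G" using assms(9) normal_imp_subgroup by blast
  obtain g where g: "g \<in> P" "P = generate G {g}" using assms(12) unfolding cyclic_sub_def by blast
  have gc: "g \<in> carrier G" using subgroup.mem_carrier[OF Pk(1)] g(1) by blast
  have ordg: "ord g = p^k" using generate_pow_card[OF gc] g(2) Pk(2) by simp
  have k1: "k \<ge> 1"
  proof (rule ccontr)
    assume "\<not> k \<ge> 1"
    hence "card P = 1" using Pk(2) by simp
    then obtain z where "P = {z}" using card_1_singletonE by blast
    hence "P = {\<one>}" using subgroup.one_closed[OF Pk(1)] by blast
    thus False using assms(13) one_is_normal by simp
  qed
  have D1: "derived G Q \<subseteq> sub_center G Q"
  proof (cases "elementary_abelian G q Q")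
    case True
    hence "sub_center G Q = Q" unfolding elementary_abelian_def abelian_sub_def sub_center_def by blast
    thus ?thesis using derived_incl[OF subset_refl Qs] by simp
  next
    case False
    thus ?thesis using assms(14) unfolding special_def by blast
  qed
  have D2: "derived G Q \<subseteq> M" if M: "maximal_sub G M Q" for M
  proof (cases "elementary_abelian G q Q")
    case True
    have Ms: "subgroup M G" using M unfolding maximal_sub_def by blast
    have "derived_set G Q \<subseteq> M"
    proof
      fix z assume "z \<in> derived_set G Q"
      then obtain h1 h2 where hh: "h1 \<in> Q" "h2 \<in> Q" "z = h1 \<otimes> h2 \<otimes> inv h1 \<otimes> inv h2" by blast
      have hc: "h1 \<in> carrier G" "h2 \<in> carrier G" using subgroup.mem_carrier[OF Qs] hh by blast+
      have "h1 \<otimes> h2 = h2 \<otimes> h1" using True hh unfolding elementary_abelian_def abelian_sub_def by blast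
      hence "z = \<one>" using hh(3) hc by (simp add: m_assoc)
      thus "z \<in> M" using subgroup.one_closed[OF Ms] by simp
    qed
    thus ?thesis unfolding derived_def using generate_subgroup_incl[OF _ Ms] by blast
  next
    case False
    hence "derived G Q = frattini G Q" using assms(14) unfolding special_def by blast
    thus ?thesis using M unfolding frattini_def by blast
  qed
  have A: "p^k dvd Lcm (ord ` carrier G)" using ordg gc by (metis dvd_Lcm imageI)
  define S where "S = {H. subgroup H G \<and> H \<subset> carrier G \<and> \<not> abelian_sub G H}"
  have B: "Lcm (sub_exp G ` S) dvd p^(k-1) * m"
  proof (rule Lcm_least)
    fix e assume "e \<in> sub_exp G ` S"
    then obtain H where H: "H \<in> S" "e = sub_exp G H" by blast
    have Hs: "subgroup H G" "H \<subset> carrier G" "\<not> abelian_sub G H" using H(1) unfolding S_def by auto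
    show "e dvd p^(k-1) * m" unfolding H(2) sub_exp_def
    proof (rule Lcm_least)
      fix o' assume "o' \<in> group.ord G ` H"
      then obtain y where y: "y \<in> H" "o' = ord y" by blast
      have yc: "y \<in> carrier G" using subgroup.mem_carrier[OF Hs(1)] y(1) by blast
      have d: "ord y dvd p^k * m" using ord_dvd_group_order[OF yc] Pk(3) by simp
      have nd: "\<not> p^k dvd ord y"
      proof
        assume pk: "p^k dvd ord y"
        have o1: "ord y \<ge> 1" using ord_ge_1[OF fin yc] .
        define dd where "dd = ord y div p^k"
        have ddv: "dd dvd ord y" "dd \<noteq> 0" using pk o1 prime_gt_0_nat[OF pp] unfolding dd_def
          by (auto elim!: dvdE)
        have "ord (y [^] dd) = ord y div dd" using ord_pow[OF yc ddv] .
        also have "\<dots> = p^k"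
        proof -
          obtain c where c: "ord y = p^k * c" using pk by (auto elim: dvdE)
          have "c > 0" using o1 c by (cases c) auto
          thus ?thesis unfolding dd_def using c prime_gt_0_nat[OF pp] by simp
        qed
        finally have oh: "ord (y [^] dd) = p^k" .
        have "y [^] dd \<in> H" using sub_nat_pow_closed[OF Hs(1) y(1)] .
        show False using key[OF fin pp pq pneq Pk(2) k1 Qj assms(9) Pk(1) assms(11) D1 D2 assms(15) assms(16)
            Hs \<open>y [^] dd \<in> H\<close> oh] .
      qed
      show "o' dvd p^(k-1) * m" using nt_lemma[OF pp k1 d nd] y(2) by simp
    qed
  qed
  have A': "p^k dvd sub_exp G (carrier G)" using A unfolding sub_exp_def .
  show ?thesis unfolding exponent_critical_def group_exp_def
  proof
    assume eq: "sub_exp G (carrier G) = Lcm (sub_exp G ` {H. subgroup H G \<and> H \<subset> carrier G \<and> \<not> abelian_sub G H})"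
    have "p^k dvd p^(k-1) * m" using A' B eq unfolding S_def by (metis dvd_trans)
    moreover have "p^k = p^(k-1) * p" using k1 by (metis Suc_diff_le diff_Suc_1 power_Suc2)
    moreover have "p^(k-1) > 0" using pp prime_gt_0_nat by simp
    ultimately have "p^(k-1) * p dvd p^(k-1) * m" by simp
    hence "p dvd m" using prime_gt_0_nat[OF pp] nat_mult_dvd_cancel_disj by simp
    thus False using Pk(4) by simp
  qed
qed

end
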